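(* Assume (SM), (LIP), (POT) and the stability axiom (A1); let $\tau:=M+3M(L[3M]/\alpha)^{1/2}$, let $i_{\min}\in\mathbb{N}$ with $q_{\mathrm{alg}}^{i_{\min}}\le1/3$, let $0<\delta<\min\{1/L[5\tau],2\alpha/L[2\tau]^2\}$, and consider the algorithm AILFEM with parameters $0<\theta\le1$, $\lambda_{\mathrm{lin}},\lambda_{\mathrm{alg}}>0$, $C_{\mathrm{mark}}\ge1$ and $|||u_0^{0,0}|||\le2M$. Let $\lambda_{\mathrm{lin}}^\star:=\min\{1,(\alpha(1-q_{\mathcal{E}}^2)/(2q_{\mathcal{E}}^2))^{1/2}/C_{\mathrm{stab}}[3M]\}$. Then, for all $(\ell,\underline{k},\underline{i})\in\mathcal{Q}$ with $\underline{k}[\ell]<\infty$, $$\eta_\ell(u_\ell^\star)\le(1+\lambda_{\mathrm{lin}}/\lambda_{\mathrm{lin}}^\star)\,\eta_\ell(u_\ell^{\underline{k},\underline{i}}),$$ and, if $0<\lambda_{\mathrm{lin}}<\lambda_{\mathrm{lin}}^\star$, moreover $$(1-\lambda_{\mathrm{lin}}/\lambda_{\mathrm{lin}}^\star)\,\eta_\ell(u_\ell^{\underline{k},\underline{i}})\le\eta_\ell(u_\ell^\star).$$ Furthermore, for $0<\lambda_{\mathrm{lin}}<\lambda_{\mathrm{lin}}^\star$ and $\theta_{\mathrm{mark}}:=(\theta^{1/2}+\lambda_{\mathrm{lin}}/\lambda_{\mathrm{lin}}^\star)^2/(1-\lambda_{\mathrm{lin}}/\lambda_{\mathrm{lin}}^\star)^2$,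 Dörfler marking for $u_\ell^\star$ with parameter $\theta_{\mathrm{mark}}$ implies Dörfler marking for $u_\ell^{\underline{k},\underline{i}}$ with parameter $\theta$: for any $\mathcal{R}_\ell\subseteq\mathcal{T}_\ell$, $$\theta_{\mathrm{mark}}\,\eta_\ell(u_\ell^\star)^2\le\eta_\ell(\mathcal{R}_\ell,u_\ell^\star)^2\implies\theta\,\eta_\ell(u_\ell^{\underline{k},\underline{i}})^2\le\eta_\ell(\mathcal{R}_\ell,u_\ell^{\underline{k},\underline{i}})^2.$$
   Context: Abstract setting. Let $\mathcal{X}$ be a real Hilbert space with scalar product $\langle\!\langle\cdot,\cdot\rangle\!\rangle$ and norm $|||\cdot|||$, with dual space $\mathcal{X}'$ (norm $\|\cdot\|_{\mathcal{X}'}$, duality bracket $\langle\cdot,\cdot\rangle$). Let $\mathcal{A}:\mathcal{X}\to\mathcal{X}'$ be a nonlinear operator and $F\in\mathcal{X}'$ with $\mathcal{A}0\neq F$. Conditions: (SM) there is $\alpha>0$ with $\alpha|||v-w|||^2\le\langle\mathcal{A}v-\mathcal{A}w,v-w\rangle$ for all $v,w\in\mathcal{X}$; (LIP) for every $\vartheta>0$ there is $L[\vartheta]>0$ with $\langle\mathcal{A}v-\mathcal{A}w,\varphi\rangle\le L[\vartheta]\,|||v-w|||\,|||\varphi|||$ for all $v,w,\varphi\in\mathcal{X}$ with $\max\{|||v|||,|||v-w|||\}\le\vartheta$; (POT) there is a Gâteaux differentiable $\mathcal{P}:\mathcal{X}\to\mathbb{R}$ with $\langle\mathcal{A}w,v\rangle=\lim_{t\to0}(\mathcal{P}(w+tv)-\mathcal{P}(w))/t$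 for all $v,w$. The energy is $\mathcal{E}(v):=\mathcal{P}(v)-F(v)$. For every closed subspace $\mathcal{Y}\subseteq\mathcal{X}$ there is a unique $u^\star_{\mathcal{Y}}\in\mathcal{Y}$ with $\langle\mathcal{A}u^\star_{\mathcal{Y}},v\rangle=F(v)$ for all $v\in\mathcal{Y}$; $u^\star:=u^\star_{\mathcal{X}}$. Put $M:=\|F-\mathcal{A}0\|_{\mathcal{X}'}/\alpha$. Meshes. $\mathcal{T}_0$ is an initial conforming simplicial triangulation; $\mathtt{refine}(\mathcal{T}_H,\mathcal{M}_H)$ is the coarsest newest-vertex-bisection (NVB) refinement of $\mathcal{T}_H$ in which all elements of $\mathcal{M}_H\subseteq\mathcal{T}_H$ are refined; $\mathbb{T}(\mathcal{T}_H)$ is the set of meshes obtained from $\mathcal{T}_H$ by finitely many NVB steps, $\mathbb{T}:=\mathbb{T}(\mathcal{T}_0)$. Each $\mathcal{T}_H\in\mathbb{T}$ is associated with a finite-dimensional subspace $\mathcal{X}_H\subset\mathcal{X}$, nested: $\mathcal{X}_H\subseteq\mathcal{X}_h$ if $\mathcal{T}_h\in\mathbb{T}(\mathcal{T}_H)$. Write $u_H^\star:=u^\star_{\mathcal{X}_H}$. Zarantonello map: for $\delta>0$, $w_H\in\mathcal{X}_H$, $\Phi_H(\delta;w_H)\in\mathcal{X}_H$ is the unique solution of $\langle\!\langle\Phi_H(\delta;w_H),v_H\rangle\!\rangle=\langle\!\langle w_H,v_H\rangle\!\rangle+\delta[F(v_H)-\langle\mathcal{A}w_H,v_H\rangle]$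 for all $v_H\in\mathcal{X}_H$. Algebraic solver: there is $0<q_{\mathrm{alg}}<1$ and for each $\mathcal{T}_H$ a map $\Psi_H:\mathcal{X}'\times\mathcal{X}_H\to\mathcal{X}_H$ such that for every $\varphi\in\mathcal{X}'$, with $w_H^\star\in\mathcal{X}_H$ solving $\langle\!\langle w_H^\star,v_H\rangle\!\rangle=\varphi(v_H)$ for all $v_H\in\mathcal{X}_H$, one has $|||w_H^\star-\Psi_H(\varphi;w_H)|||\le q_{\mathrm{alg}}|||w_H^\star-w_H|||$ for all $w_H\in\mathcal{X}_H$. One writes $\Psi_H(w_H^\star;\cdot)$ for $\Psi_H(\varphi;\cdot)$. Estimator: for $\mathcal{T}_H\in\mathbb{T}$, $T\in\mathcal{T}_H$, $v_H\in\mathcal{X}_H$ a number $\eta_H(T,v_H)\ge0$ is given; $\eta_H(\mathcal{U},v_H):=(\sum_{T\in\mathcal{U}}\eta_H(T,v_H)^2)^{1/2}$ for $\mathcal{U}\subseteq\mathcal{T}_H$ and $\eta_H(v_H):=\eta_H(\mathcal{T}_H,v_H)$. Axiom (A1) stability: for every $\vartheta>0$ there is $C_{\mathrm{stab}}[\vartheta]>0$ such that for all $\mathcal{T}_H\in\mathbb{T}$, $\mathcal{T}_h\in\mathbb{T}(\mathcal{T}_H)$, $\mathcal{U}_H\subseteq\mathcal{T}_h\cap\mathcal{T}_H$, $v_h\in\mathcal{X}_h$, $v_H\in\mathcal{X}_H$ with $\max\{|||v_h|||,|||v_h-v_H|||\}\le\vartheta$: $|\eta_h(\mathcal{U}_H,v_h)-\eta_H(\mathcal{U}_H,v_H)|\le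 C_{\mathrm{stab}}[\vartheta]\,|||v_h-v_H|||$. Index $\ell$ refers to $\mathcal{T}_\ell$, $\mathcal{X}_\ell$, $\Phi_\ell$, $\Psi_\ell$, $\eta_\ell$, $u_\ell^\star$. Algorithm AILFEM. Input: $\mathcal{T}_0$, $0<\theta\le1$, $C_{\mathrm{mark}}\ge1$, $\lambda_{\mathrm{lin}},\lambda_{\mathrm{alg}}>0$, $i_{\min}\in\mathbb{N}$, $\delta>0$, $u_0^{0,0}\in\mathcal{X}_0$ with $|||u_0^{0,0}|||\le2M$; set $u_0^{0,\star}:=u_0^{0,\underline{i}}:=u_0^{0,0}$. For $\ell=0,1,2,\dots$: (I) For $k=1,2,\dots$: set $u_\ell^{k,0}:=u_\ell^{k-1,\underline{i}}$ and $u_\ell^{k,\star}:=\Phi_\ell(\delta;u_\ell^{k-1,\underline{i}})$ (not computed). For $i=1,2,\dots$: compute $u_\ell^{k,i}:=\Psi_\ell(u_\ell^{k,\star};u_\ell^{k,i-1})$ and $\eta_\ell(u_\ell^{k,i})$; terminate the $i$-loop with $\underline{i}[\ell,k]:=i$ if $|||u_\ell^{k,i-1}-u_\ell^{k,i}|||\le\lambda_{\mathrm{alg}}[\lambda_{\mathrm{lin}}\eta_\ell(u_\ell^{k,i})+|||u_\ell^{k,i}-u_\ell^{k,0}|||]$ and $i_{\min}\le i$. Write $u_\ell^{k,\underline{i}}:=u_\ell^{k,\underline{i}[\ell,k]}$. Terminate the $k$-loop with $\underline{k}[\ell]:=k$ if $\mathcal{E}(u_\ell^{k,0})-\mathcal{E}(u_\ell^{k,\underline{i}})\le\lambda_{\mathrm{lin}}^2\eta_\ell(u_\ell^{k,\underline{i}})^2$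 and $|||u_\ell^{k,\underline{i}}|||\le2M$. (II) Choose $\mathcal{M}_\ell\subseteq\mathcal{T}_\ell$ with $\theta\,\eta_\ell(u_\ell^{\underline{k},\underline{i}})^2\le\eta_\ell(\mathcal{M}_\ell,u_\ell^{\underline{k},\underline{i}})^2$ and $\#\mathcal{M}_\ell\le C_{\mathrm{mark}}\min\{\#\mathcal{U}:\mathcal{U}\subseteq\mathcal{T}_\ell,\ \theta\eta_\ell(u_\ell^{\underline{k},\underline{i}})^2\le\eta_\ell(\mathcal{U},u_\ell^{\underline{k},\underline{i}})^2\}$. (III) $\mathcal{T}_{\ell+1}:=\mathtt{refine}(\mathcal{T}_\ell,\mathcal{M}_\ell)$ and $u_{\ell+1}^{0,0}:=u_{\ell+1}^{0,\underline{i}}:=u_{\ell+1}^{0,\star}:=u_\ell^{\underline{k},\underline{i}}$. Index set: $\mathcal{Q}:=\{(\ell,k,i)\in\mathbb{N}_0^3: u_\ell^{k,i}\text{ is used in the algorithm}\}$; $\underline{k}[\ell]:=\sup\{k\in\mathbb{N}:(\ell,k,0)\in\mathcal{Q}\}$; $u_\ell^{\underline{k},\underline{i}}$ denotes the final iterate $u_\ell^{\underline{k}[\ell],\underline{i}[\ell,\underline{k}[\ell]]}$. $q_{\mathcal{E}}=q_{\mathcal{E}}[\delta,\tau]\in(0,1)$ is defined by $q_{\mathcal{E}}^2:=1-(1/\delta-L[5\tau])(1-q_{\mathrm{alg}}^{i_{\min}})^2\delta^2\alpha^2/L[2\tau]$. *)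

theory Defs
  imports "HOL-Analysis.Analysis"
begin

text \<open>Elements of the dual X' are represented by
 bounded linear functionals of type 'a => real; the dual norm is onorm.
 The operator A maps v to the functional A v (so A v w is the duality bracket <A v, w>).\<close>

definition galerkin_sol :: "('a::real_inner \<Rightarrow> 'a \<Rightarrow> real) \<Rightarrow> ('a \<Rightarrow> real) \<Rightarrow> 'a set \<Rightarrow> 'a" where
  "galerkin_sol A F Y = (THE u. u \<in> Y \<and> (\<forall>v\<in>Y. A u v = F v))"

definition riesz_sol :: "'a::real_inner set \<Rightarrow> ('a \<Rightarrow> real) \<Rightarrow> 'a" where
  "riesz_sol Y phi = (THE w. w \<in> Y \<and> (\<forall>v\<in>Y. inner w v = phi v))"

definition zar_rhs :: "('a::real_inner \<Rightarrow> 'a \<Rightarrow> real) \<Rightarrow> ('a \<Rightarrow> real) \<Rightarrow> real \<Rightarrow> 'a \<Rightarrow> ('a \<Rightarrow> real)" where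
  "zar_rhs A F delta w = (\<lambda>v. inner w v + delta * (F v - A w v))"

definition zarantonello :: "('a::real_inner \<Rightarrow> 'a \<Rightarrow> real) \<Rightarrow> ('a \<Rightarrow> real) \<Rightarrow> 'a set \<Rightarrow> real \<Rightarrow> 'a \<Rightarrow> 'a" where
  "zarantonello A F Y delta w = riesz_sol Y (zar_rhs A F delta w)"

definition eta_set :: "('m \<Rightarrow> 't \<Rightarrow> 'a \<Rightarrow> real) \<Rightarrow> 'm \<Rightarrow> 't set \<Rightarrow> 'a \<Rightarrow> real" where
  "eta_set eta H U v = sqrt (\<Sum>T\<in>U. (eta H T v)\<^sup>2)"

inductive refines :: "('m \<Rightarrow> 't set \<Rightarrow> 'm) \<Rightarrow> ('m \<Rightarrow> 't set) \<Rightarrow> 'm \<Rightarrow> 'm \<Rightarrow> bool"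
  for refine elems where
  refl: "refines refine elems T T"
| step: "refines refine elems T T' \<Longrightarrow> M \<subseteq> elems T' \<Longrightarrow> refines refine elems T (refine T' M)"

text \<open>A (terminated up to level L) run of algorithm AILFEM. Outputs: meshes Tm l, marked sets
 Mk l, iterates u l k i, stopping indices kbar l and ibar l k (with ibar l 0 = 0 so that
 u l 0 (ibar l 0) = u l 0 0). All levels l \<le> L have finite kbar l.\<close>
definition ailfem_run ::
  "'m \<Rightarrow> ('m \<Rightarrow> 't set) \<Rightarrow> ('m \<Rightarrow> 't set \<Rightarrow> 'm) \<Rightarrow> ('m \<Rightarrow> 't \<Rightarrow> 'a::real_inner \<Rightarrow> real)
   \<Rightarrow> ('m \<Rightarrow> ('a \<Rightarrow> real) \<Rightarrow> 'a \<Rightarrow> 'a)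
   \<Rightarrow> ('a \<Rightarrow> 'a \<Rightarrow> real) \<Rightarrow> ('a \<Rightarrow> real) \<Rightarrow> ('a \<Rightarrow> real)
   \<Rightarrow> real \<Rightarrow> real \<Rightarrow> real \<Rightarrow> real \<Rightarrow> real \<Rightarrow> nat \<Rightarrow> real \<Rightarrow> 'a
   \<Rightarrow> (nat \<Rightarrow> 'm) \<Rightarrow> (nat \<Rightarrow> 't set) \<Rightarrow> (nat \<Rightarrow> nat \<Rightarrow> nat \<Rightarrow> 'a) \<Rightarrow> (nat \<Rightarrow> nat) \<Rightarrow> (nat \<Rightarrow> nat \<Rightarrow> nat)
   \<Rightarrow> nat \<Rightarrow> bool" where
  "ailfem_run T0 elems refine eta Psi A F P delta theta Cmark lam_lin lam_alg imin Mb u00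
      Tm Mk u kbar ibar L \<longleftrightarrow>
    (let E = (\<lambda>v. P v - F v);
         est = (\<lambda>l v. eta_set eta (Tm l) (elems (Tm l)) v);
         fin = (\<lambda>l. u l (kbar l) (ibar l (kbar l)))
     in
    Tm 0 = T0 \<and> u 0 0 0 = u00 \<and>
    (\<forall>l<L. u (Suc l) 0 0 = fin l) \<and>
    (\<forall>l\<le>L. ibar l 0 = 0 \<and> 1 \<le> kbar l \<and>
       (\<forall>k\<in>{1..kbar l}.
          u l k 0 = u l (k - 1) (ibar l (k - 1)) \<and> 1 \<le> ibar l k \<and>
          (\<forall>i\<in>{1..ibar l k}.
             u l k i = Psi (Tm l) (zar_rhs A F delta (u l (k - 1) (ibar l (k - 1)))) (u l k (i - 1))) \<and>
          (\<forall>i\<in>{1..ibar l k}.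
             (norm (u l k (i - 1) - u l k i) \<le> lam_alg * (lam_lin * est l (u l k i) + norm (u l k i - u l k 0))
              \<and> imin \<le> i) \<longleftrightarrow> i = ibar l k)) \<and>
       (\<forall>k\<in>{1..kbar l}.
          (E (u l k 0) - E (u l k (ibar l k)) \<le> lam_lin\<^sup>2 * (est l (u l k (ibar l k)))\<^sup>2
           \<and> norm (u l k (ibar l k)) \<le> 2 * Mb) \<longleftrightarrow> k = kbar l)) \<and>
    (\<forall>l<L.
       Mk l \<subseteq> elems (Tm l) \<and>
       theta * (est l (fin l))\<^sup>2 \<le> (eta_set eta (Tm l) (Mk l) (fin l))\<^sup>2 \<and>
       real (card (Mk l)) \<le> Cmark * real (Min {card U | U. U \<subseteq> elems (Tm l) \<and>
            theta * (est l (fin l))\<^sup>2 \<le> (eta_set eta (Tm l) U (fin l))\<^sup>2}) \<and>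
       Tm (Suc l) = refine (Tm l) (Mk l)))"

end

theory Submission
  imports Defs
begin

lemma riesz_exists_aux:
  fixes B :: "'a::real_inner set"
  assumes "finite B"
  shows "\<forall>phi. linear phi \<longrightarrow> (\<exists>w\<in>span B. \<forall>v\<in>span B. inner w v = phi v)"
  using assms
proof (induction B rule: finite_induct)
  case empty
  show ?case by (auto intro!: bexI[of _ 0] simp: real_vector.linear_0)
next
  case (insert b B)
  show ?case
  proof (intro allI impI)
    fix phi :: "'a \<Rightarrow> real" assume lin: "linear phi"
    have linb: "linear (inner b)"
      by (simp add: bounded_linear.linear bounded_linear_inner_right)
    obtain p where p: "p \<in> span B" "\<forall>v\<in>span B. inner p v = inner b v"
      using insert.IH linb by blast
    obtain w' where w': "w' \<in> span B" "\<forall>v\<in>span B. inner w' v = phi v"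
      using insert.IH lin by blast
    define c where "c = b - p"
    have corth: "inner c v = 0" if "v \<in> span B" for v
      using p that by (simp add: c_def inner_diff_left)
    have cspan: "c \<in> span (insert b B)"
      unfolding c_def using p(1)
      by (meson insert_subset span_diff span_mono span_superset subsetD subset_insertI)
    have w'span: "w' \<in> span (insert b B)"
      using w'(1) span_mono[of B "insert b B"] by blast
    show "\<exists>w\<in>span (insert b B). \<forall>v\<in>span (insert b B). inner w v = phi v"
    proof (cases "c = 0")
      case True
      then have "b \<in> span B" using p(1) by (simp add: c_def)
      then have "span (insert b B) = span B"
        by (simp add: span_redundant)
      then show ?thesis using w' by auto
    next
      case False
      define t where "t = phi c / (inner c c)"
      have cc: "inner c c \<noteq> 0" using False by simp
      show ?thesis
      proof (intro bexI[of _ "w' + t *\<^sub>R c"] ballI)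
        show "w' + t *\<^sub>R c \<in> span (insert b B)"
          using cspan w'span by (simp add: span_add span_scale)
        fix v assume "v \<in> span (insert b B)"
        then obtain k where k: "v - k *\<^sub>R b \<in> span B"
          by (auto simp: span_insert)
        define y where "y = v - k *\<^sub>R b + k *\<^sub>R p"
        have y: "y \<in> span B" unfolding y_def using k p(1) by (simp add: span_add span_scale)
        have v: "v = y + k *\<^sub>R c" by (simp add: y_def c_def algebra_simps)
        have "inner (w' + t *\<^sub>R c) v = inner w' y + k * inner w' c + t * inner c y + t * k * inner c c"
          by (simp add: v inner_add_left inner_add_right algebra_simps)
        also have "inner w' c = 0" using corth[OF w'(1)] by (simp add: inner_commute)
        also have "inner c y = 0" using corth[OF y] .
        also have "t * k * inner c c = k * phi c" using cc by (simp add: t_def)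
        finally have "inner (w' + t *\<^sub>R c) v = phi y + k * phi c" using w'(2) y by simp
        also have "\<dots> = phi v" using lin by (simp add: v real_vector.linear_add linear_cmul)
        finally show "inner (w' + t *\<^sub>R c) v = phi v" .
      qed
    qed
  qed
qed

lemma riesz_sol_prop:
  fixes Y :: "'a::real_inner set"
  assumes "\<exists>B. finite B \<and> Y = span B" and "linear phi"
  shows "riesz_sol Y phi \<in> Y \<and> (\<forall>v\<in>Y. inner (riesz_sol Y phi) v = phi v)"
proof -
  obtain B where B: "finite B" "Y = span B" using assms(1) by blast
  obtain w where w: "w \<in> Y" "\<forall>v\<in>Y. inner w v = phi v"
    using riesz_exists_aux[OF B(1)] assms(2) B(2) by blast
  have uniq: "w' = w" if "w' \<in> Y" "\<forall>v\<in>Y. inner w' v = phi v" for w'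
  proof -
    have "w' - w \<in> Y" using that(1) w(1) B(2) by (simp add: span_diff)
    then have "inner (w' - w) (w' - w) = 0"
      using that(2) w(2) by (simp add: inner_diff_left)
    then show ?thesis by simp
  qed
  have "riesz_sol Y phi = w"
    unfolding riesz_sol_def
  proof (rule the_equality)
    show "w \<in> Y \<and> (\<forall>v\<in>Y. inner w v = phi v)" using w by blast
    show "\<And>x. x \<in> Y \<and> (\<forall>v\<in>Y. inner x v = phi v) \<Longrightarrow> x = w" using uniq by blast
  qed
  then show ?thesis using w by simp
qed

lemma span_finite_closed:
  fixes B :: "'a::real_inner set"
  assumes "finite B"
  shows "closed (span B)"
  unfolding closed_sequential_limits
proof (intro allI impI)
  fix x :: "nat \<Rightarrow> 'a" and l assume h: "(\<forall>n. x n \<in> span B) \<and> x \<longlonglongrightarrow> l"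
  have lin: "linear (inner l)"
    by (simp add: bounded_linear.linear bounded_linear_inner_right)
  define p where "p = riesz_sol (span B) (inner l)"
  have p: "p \<in> span B" "\<forall>v\<in>span B. inner p v = inner l v"
    using riesz_sol_prop[of "span B" "inner l"] assms lin unfolding p_def by blast+
  have eq: "inner (l - p) (l - x n) = inner (l - p) (l - p)" for n
  proof -
    have "x n - p \<in> span B" using h p(1) by (simp add: span_diff)
    then have "inner p (x n - p) = inner l (x n - p)" by (rule p(2)[rule_format])
    then have "inner (l - p) (x n - p) = 0" by (simp add: inner_diff_left)
    then show ?thesis by (simp add: inner_diff_right inner_diff_left algebra_simps)
  qed
  have "(\<lambda>n. inner (l - p) (l - x n)) \<longlonglongrightarrow> inner (l - p) (l - l)"
    using h by (intro tendsto_intros) auto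
  then have "(\<lambda>n. inner (l - p) (l - p)) \<longlonglongrightarrow> 0" using eq by simp
  then have "inner (l - p) (l - p) = 0" by (simp add: LIMSEQ_const_iff)
  then have "l = p" by simp
  then show "l \<in> span B" using p(1) by simp
qed

lemma seg_deriv:
  fixes A :: "'a::real_normed_vector \<Rightarrow> 'a \<Rightarrow> real" and P F :: "'a \<Rightarrow> real"
  assumes POT: "\<And>v w. ((\<lambda>t. (P (w + t *\<^sub>R v) - P w) / t) \<longlongrightarrow> A w v) (at 0)"
    and F: "bounded_linear F"
  shows "((\<lambda>s. P (x + s *\<^sub>R d) - F (x + s *\<^sub>R d)) has_real_derivative (A (x + t *\<^sub>R d) d - F d)) (at t)"
proof -
  let ?y = "x + t *\<^sub>R d"
  have l1: "((\<lambda>h. (P (?y + h *\<^sub>R d) - P ?y) / h - F d) \<longlongrightarrow> A ?y d - F d) (at 0)"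
    by (intro tendsto_diff POT tendsto_const)
  have eq: "(P (?y + h *\<^sub>R d) - P ?y) / h - F d
      = ((P (x + (t + h) *\<^sub>R d) - F (x + (t + h) *\<^sub>R d)) - (P (x + t *\<^sub>R d) - F (x + t *\<^sub>R d))) / h"
    if "h \<noteq> 0" for h
  proof -
    have "x + (t + h) *\<^sub>R d = ?y + h *\<^sub>R d" by (simp add: scaleR_add_left algebra_simps)
    moreover have "F (?y + h *\<^sub>R d) = F ?y + h * F d"
      using F by (simp add: bounded_linear.linear real_vector.linear_add linear_cmul)
    ultimately show ?thesis using that by (simp add: field_simps)
  qed
  have "eventually (\<lambda>h. (P (?y + h *\<^sub>R d) - P ?y) / h - F d
      = ((P (x + (t + h) *\<^sub>R d) - F (x + (t + h) *\<^sub>R d)) - (P (x + t *\<^sub>R d) - F (x + t *\<^sub>R d))) / h) (at 0)"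
    unfolding eventually_at_filter using eq by (intro always_eventually) auto
  then have "((\<lambda>h. ((P (x + (t + h) *\<^sub>R d) - F (x + (t + h) *\<^sub>R d)) - (P (x + t *\<^sub>R d) - F (x + t *\<^sub>R d))) / h) \<longlongrightarrow> A ?y d - F d) (at 0)"
    using l1 by (simp add: tendsto_cong)
  then show ?thesis unfolding DERIV_def by simp
qed

lemma deriv_lower:
  fixes g g' :: "real \<Rightarrow> real"
  assumes "\<And>t. (g has_real_derivative g' t) (at t)"
    and "\<And>t. 0 \<le> t \<Longrightarrow> t \<le> 1 \<Longrightarrow> a + c * t \<le> g' t"
  shows "a + c / 2 \<le> g 1 - g 0"
proof -
  let ?h = "\<lambda>t. g t - a * t - c * t ^ 2 / 2"
  have "?h 0 \<le> ?h 1"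
  proof (rule DERIV_nonneg_imp_nondecreasing[where f = ?h])
    fix t :: real assume "0 \<le> t" "t \<le> 1"
    have "DERIV ?h t :> g' t - a - c * t"
      by (rule derivative_eq_intros assms(1) refl | simp)+
    moreover have "g' t - a - c * t \<ge> 0"
      using assms(2)[OF \<open>0 \<le> t\<close> \<open>t \<le> 1\<close>] by simp
    ultimately show "\<exists>y. DERIV ?h t :> y \<and> y \<ge> 0" by blast
  qed simp
  then show ?thesis by simp
qed

lemma deriv_upper:
  fixes g g' :: "real \<Rightarrow> real"
  assumes "\<And>t. (g has_real_derivative g' t) (at t)"
    and "\<And>t. 0 \<le> t \<Longrightarrow> t \<le> 1 \<Longrightarrow> g' t \<le> a + c * t"
  shows "g 1 - g 0 \<le> a + c / 2"
proof -
  have "(-a) + (-c) / 2 \<le> (- g) 1 - (- g) 0"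
    by (rule deriv_lower[where g' = "\<lambda>t. - g' t"]) (auto intro: derivative_eq_intros assms(1), smt (verit) assms(2))
  then show ?thesis by simp
qed

lemma energy_lower:
  fixes A :: "'a::real_normed_vector \<Rightarrow> 'a \<Rightarrow> real" and P F :: "'a \<Rightarrow> real"
  assumes POT: "\<And>v w. ((\<lambda>t. (P (w + t *\<^sub>R v) - P w) / t) \<longlongrightarrow> A w v) (at 0)"
    and F: "bounded_linear F"
    and A_dual: "\<And>v. bounded_linear (A v)"
    and SM: "\<And>v w. alpha * (norm (v - w))\<^sup>2 \<le> A v (v - w) - A w (v - w)"
  shows "(A x d - F d) + alpha / 2 * (norm d)\<^sup>2 \<le> (P (x + d) - F (x + d)) - (P x - F x)"
proof -
  let ?g = "\<lambda>s. P (x + s *\<^sub>R d) - F (x + s *\<^sub>R d)"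
  have "(A x d - F d) + alpha * (norm d)\<^sup>2 / 2 \<le> ?g 1 - ?g 0"
  proof (rule deriv_lower[where g' = "\<lambda>t. A (x + t *\<^sub>R d) d - F d"])
    show "\<And>t. (?g has_real_derivative A (x + t *\<^sub>R d) d - F d) (at t)"
      by (rule seg_deriv[OF POT F])
    fix t :: real assume t: "0 \<le> t" "t \<le> 1"
    show "A x d - F d + alpha * (norm d)\<^sup>2 * t \<le> A (x + t *\<^sub>R d) d - F d"
    proof (cases "t = 0")
      case True then show ?thesis by simp
    next
      case False
      then have tp: "t > 0" using t by simp
      have "alpha * (norm (t *\<^sub>R d))\<^sup>2 \<le> A (x + t *\<^sub>R d) (t *\<^sub>R d) - A x (t *\<^sub>R d)"
        using SM[of "x + t *\<^sub>R d" x] by simp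
      also have "\<dots> = t * (A (x + t *\<^sub>R d) d - A x d)"
        using A_dual by (simp add: bounded_linear.linear linear_cmul algebra_simps)
      finally have "t * (t * (alpha * (norm d)\<^sup>2)) \<le> t * (A (x + t *\<^sub>R d) d - A x d)"
        using tp by (simp add: power2_eq_square algebra_simps)
      then have "t * (alpha * (norm d)\<^sup>2) \<le> A (x + t *\<^sub>R d) d - A x d"
        using tp by simp
      then show ?thesis by (simp add: algebra_simps)
    qed
  qed
  then show ?thesis by simp
qed

lemma energy_upper:
  fixes A :: "'a::real_normed_vector \<Rightarrow> 'a \<Rightarrow> real" and P F :: "'a \<Rightarrow> real"
  assumes POT: "\<And>v w. ((\<lambda>t. (P (w + t *\<^sub>R v) - P w) / t) \<longlongrightarrow> A w v) (at 0)"
    and F: "bounded_linear F"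
    and LIPth: "\<forall>v w phi. max (norm v) (norm (v - w)) \<le> th \<longrightarrow> A v phi - A w phi \<le> Lc * norm (v - w) * norm phi"
    and seg: "\<And>t. 0 \<le> t \<Longrightarrow> t \<le> 1 \<Longrightarrow> norm (x + t *\<^sub>R d) \<le> th"
    and dth: "norm d \<le> th"
  shows "(P (x + d) - F (x + d)) - (P x - F x) \<le> (A x d - F d) + Lc / 2 * (norm d)\<^sup>2"
proof -
  let ?g = "\<lambda>s. P (x + s *\<^sub>R d) - F (x + s *\<^sub>R d)"
  have "?g 1 - ?g 0 \<le> (A x d - F d) + Lc * (norm d)\<^sup>2 / 2"
  proof (rule deriv_upper[where g' = "\<lambda>t. A (x + t *\<^sub>R d) d - F d"])
    show "\<And>t. (?g has_real_derivative A (x + t *\<^sub>R d) d - F d) (at t)"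
      by (rule seg_deriv[OF POT F])
    fix t :: real assume t: "0 \<le> t" "t \<le> 1"
    have "norm (t *\<^sub>R d) \<le> th"
      using t dth by (smt (verit) mult_left_le_one_le norm_ge_zero norm_scaleR)
    then have "max (norm (x + t *\<^sub>R d)) (norm (x + t *\<^sub>R d - x)) \<le> th"
      using seg[OF t] by simp
    then have "A (x + t *\<^sub>R d) d - A x d \<le> Lc * norm (x + t *\<^sub>R d - x) * norm d"
      using LIPth by blast
    also have "\<dots> = Lc * (norm d)\<^sup>2 * t"
      using t by (simp add: power2_eq_square)
    finally show "A (x + t *\<^sub>R d) d - F d \<le> A x d - F d + Lc * (norm d)\<^sup>2 * t"
      by simp
  qed
  then show ?thesis by simp
qed

lemma zar_lin:
  assumes "bounded_linear (A w)" "bounded_linear F"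
  shows "linear (zar_rhs A F delta w)"
proof -
  have "bounded_linear (\<lambda>v. inner w v + delta * (F v - A w v))"
    using assms by (intro bounded_linear_add bounded_linear_inner_right bounded_linear_const_mult bounded_linear_sub)
  then show ?thesis unfolding zar_rhs_def by (rule bounded_linear.linear)
qed

lemma zar_prop:
  fixes A :: "'a::real_inner \<Rightarrow> 'a \<Rightarrow> real"
  assumes Y: "\<exists>B. finite B \<and> Y = span B" and "bounded_linear (A w)" "bounded_linear F"
  shows "riesz_sol Y (zar_rhs A F delta w) \<in> Y \<and>
     (\<forall>v\<in>Y. inner (riesz_sol Y (zar_rhs A F delta w)) v = inner w v + delta * (F v - A w v))"
  using riesz_sol_prop[OF Y zar_lin[of A w F delta, OF assms(2,3)]] unfolding zar_rhs_def by simp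

lemma galerkin_exists:
  fixes A :: "'a::{real_inner, complete_space} \<Rightarrow> 'a \<Rightarrow> real" and F :: "'a \<Rightarrow> real"
  assumes A_dual: "\<And>v. bounded_linear (A v)"
    and F_dual: "bounded_linear F"
    and SM_alpha: "alpha > 0"
    and SM: "\<And>v w. alpha * (norm (v - w))\<^sup>2 \<le> A v (v - w) - A w (v - w)"
    and LIP: "\<And>th. th > 0 \<Longrightarrow> Lip th > 0 \<and>
       (\<forall>v w phi. max (norm v) (norm (v - w)) \<le> th \<longrightarrow>
          A v phi - A w phi \<le> Lip th * norm (v - w) * norm phi)"
    and Y: "\<exists>B. finite B \<and> Y = span B"
  shows "\<exists>u\<in>Y. \<forall>v\<in>Y. A u v = F v"
proof -
  obtain B where B: "finite B" "Y = span B" using Y by blast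
  have Ysub: "subspace Y" using B by simp
  define K where "K = onorm (\<lambda>v. F v - A 0 v)"
  have blK: "bounded_linear (\<lambda>v. F v - A 0 v)"
    using A_dual F_dual by (intro bounded_linear_sub)
  have K: "\<bar>F v - A 0 v\<bar> \<le> K * norm v" for v
    using onorm[OF blK, of v] unfolding K_def by simp
  have K0: "K \<ge> 0" unfolding K_def using onorm_pos_le[OF blK] .
  define R where "R = 2 * K / alpha + 1"
  have R0: "R > 0" unfolding R_def using K0 SM_alpha by (simp add: field_simps add_pos_nonneg)
  have KR: "K \<le> alpha * R / 2" unfolding R_def using SM_alpha by (simp add: field_simps)
  define Lc where "Lc = Lip (2 * R)"
  have Lc: "Lc > 0" "\<forall>v w phi. max (norm v) (norm (v - w)) \<le> 2 * R \<longrightarrow>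
          A v phi - A w phi \<le> Lc * norm (v - w) * norm phi"
    using LIP[of "2 * R"] R0 unfolding Lc_def by auto
  define d0 where "d0 = alpha / (Lc\<^sup>2 + alpha\<^sup>2)"
  have d0: "d0 > 0" unfolding d0_def using SM_alpha
    by (intro divide_pos_pos SM_alpha add_nonneg_pos zero_le_power2) simp
  define x where "x = d0 * alpha"
  have x: "0 < x" "x < 1"
  proof -
    have a: "0 < alpha\<^sup>2" using SM_alpha by simp
    have b: "alpha\<^sup>2 < Lc\<^sup>2 + alpha\<^sup>2" using Lc(1) by simp
    have xe: "x = alpha\<^sup>2 / (Lc\<^sup>2 + alpha\<^sup>2)" unfolding x_def d0_def by (simp add: power2_eq_square)
    show "0 < x" unfolding xe using a b by (smt (verit) divide_pos_pos)
    show "x < 1" unfolding xe by (metis a b divide_less_eq_1_pos less_trans)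
  qed
  have d0L: "d0 * Lc\<^sup>2 \<le> alpha"
  proof -
    have p: "0 < Lc\<^sup>2 + alpha\<^sup>2" using SM_alpha by (smt (verit) zero_le_power2 zero_less_power)
    have "Lc\<^sup>2 / (Lc\<^sup>2 + alpha\<^sup>2) \<le> 1" using p by (simp add: divide_le_eq_1_pos)
    then have "alpha * (Lc\<^sup>2 / (Lc\<^sup>2 + alpha\<^sup>2)) \<le> alpha * 1"
      using SM_alpha by (intro mult_left_mono) auto
    then show ?thesis unfolding d0_def by simp
  qed
  define kappa where "kappa = sqrt (1 - x)"
  have kappa: "0 \<le> kappa" "kappa < 1" "kappa \<le> 1 - x / 2"
  proof -
    show "0 \<le> kappa" unfolding kappa_def using x by simp
    show "kappa < 1" unfolding kappa_def using x by simp
    have "sqrt (1 - x) \<le> sqrt ((1 - x / 2)\<^sup>2)"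
      by (rule real_sqrt_le_mono) (simp add: power2_eq_square field_simps)
    then show "kappa \<le> 1 - x / 2" unfolding kappa_def using x by simp
  qed
  define f where "f = (\<lambda>w. riesz_sol Y (zar_rhs A F d0 w))"
  have fprop: "f w \<in> Y" "\<And>v. v \<in> Y \<Longrightarrow> inner (f w) v = inner w v + d0 * (F v - A w v)" for w
    using zar_prop[of Y A w F d0, OF Y A_dual[of w] F_dual] unfolding f_def by auto
  define S where "S = Y \<inter> cball 0 R"
  have contr: "norm (f v - f w) \<le> kappa * norm (v - w)" if "v \<in> S" "w \<in> S" for v w
  proof -
    have vY: "v \<in> Y" and wY: "w \<in> Y" and nv: "norm v \<le> R" and nw: "norm w \<le> R"
      using that unfolding S_def by auto
    define z where "z = f v - f w"
    define rho where "rho = ((v - w) - z) /\<^sub>R d0"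
    have zY: "z \<in> Y" unfolding z_def using fprop Ysub by (simp add: subspace_diff)
    have rhoY: "rho \<in> Y" unfolding rho_def using zY vY wY Ysub
      by (simp add: subspace_diff subspace_scale)
    have rho_prop: "inner rho y = A v y - A w y" if "y \<in> Y" for y
    proof -
      have "inner z y = inner (v - w) y - d0 * (A v y - A w y)"
        unfolding z_def using fprop(2)[OF that, of v] fprop(2)[OF that, of w]
        by (simp add: inner_diff_left algebra_simps)
      moreover have "inner rho y = (inner (v - w) y - inner z y) / d0"
        unfolding rho_def inner_scaleR_left inner_diff_left by (simp add: divide_inverse mult.commute)
      ultimately show ?thesis using d0 by simp
    qed
    have zeq: "z = (v - w) - d0 *\<^sub>R rho" unfolding rho_def using d0 by simp
    have vwY: "v - w \<in> Y" using vY wY Ysub by (simp add: subspace_diff)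
    have i1: "inner rho (v - w) \<ge> alpha * (norm (v - w))\<^sup>2"
      using rho_prop[OF vwY] SM[of v w] by simp
    have "max (norm v) (norm (v - w)) \<le> 2 * R"
      using nv nw R0 norm_triangle_ineq4[of v w] by simp
    then have "A v rho - A w rho \<le> Lc * norm (v - w) * norm rho" using Lc(2) by blast
    then have "(norm rho)\<^sup>2 \<le> Lc * norm (v - w) * norm rho"
      using rho_prop[OF rhoY] by (simp add: power2_norm_eq_inner)
    then have "norm rho \<le> Lc * norm (v - w)"
      using Lc(1) by (cases "norm rho = 0") (auto simp: power2_eq_square)
    then have i2: "(norm rho)\<^sup>2 \<le> Lc\<^sup>2 * (norm (v - w))\<^sup>2"
      by (metis norm_ge_zero power_mono power_mult_distrib)
    have "(norm z)\<^sup>2 = (norm (v - w))\<^sup>2 - 2 * d0 * inner rho (v - w) + d0\<^sup>2 * (norm rho)\<^sup>2"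
      unfolding zeq power2_norm_eq_inner
      by (simp add: inner_diff_left inner_diff_right inner_commute power2_eq_square algebra_simps)
    also have "\<dots> \<le> (norm (v - w))\<^sup>2 - 2 * d0 * (alpha * (norm (v - w))\<^sup>2) + d0\<^sup>2 * (Lc\<^sup>2 * (norm (v - w))\<^sup>2)"
      using i1 i2 d0 by (intro add_mono diff_mono mult_left_mono) auto
    also have "\<dots> = (norm (v - w))\<^sup>2 * (1 - 2 * x + d0 * (d0 * Lc\<^sup>2))"
      unfolding x_def by (simp add: power2_eq_square algebra_simps)
    also have "\<dots> \<le> (norm (v - w))\<^sup>2 * (1 - 2 * x + d0 * alpha)"
      using d0L d0 by (intro mult_left_mono add_left_mono) auto
    also have "\<dots> = (norm (v - w))\<^sup>2 * (1 - x)"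
      unfolding x_def by simp
    also have "\<dots> = (kappa * norm (v - w))\<^sup>2"
      using x unfolding kappa_def power_mult_distrib by simp
    finally have "(norm z)\<^sup>2 \<le> (kappa * norm (v - w))\<^sup>2" .
    moreover have "0 \<le> kappa * norm (v - w)" using kappa(1) by simp
    ultimately show ?thesis unfolding z_def by (rule power2_le_imp_le)
  qed
  have f0: "norm (f 0) \<le> d0 * K"
  proof -
    have "(norm (f 0))\<^sup>2 = d0 * (F (f 0) - A 0 (f 0))"
      using fprop(2)[OF fprop(1), of 0] by (simp add: power2_norm_eq_inner)
    also have "\<dots> \<le> d0 * (K * norm (f 0))"
      using K[of "f 0"] d0 by (intro mult_left_mono) auto
    finally show ?thesis
      using d0 K0 by (cases "norm (f 0) = 0") (auto simp: power2_eq_square)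
  qed
  have zeroS: "0 \<in> S" unfolding S_def using Ysub R0 by (simp add: subspace_0)
  have maps: "f ` S \<subseteq> S"
  proof
    fix y assume "y \<in> f ` S"
    then obtain w where w: "w \<in> S" "y = f w" by blast
    have "norm (f w) \<le> norm (f w - f 0) + norm (f 0)"
      using norm_triangle_ineq[of "f w - f 0" "f 0"] by simp
    also have "\<dots> \<le> kappa * norm (w - 0) + d0 * K"
      using contr[OF w(1) zeroS] f0 by simp
    also have "\<dots> \<le> (1 - x / 2) * R + d0 * K"
      using w(1) kappa unfolding S_def
      by (intro add_right_mono mult_mono) auto
    also have "\<dots> \<le> R"
      using KR d0 SM_alpha unfolding x_def by (simp add: field_simps)
    finally show "y \<in> S" using w fprop(1) unfolding S_def by simp
  qed
  have "closed S" unfolding S_def using span_finite_closed[OF B(1)] B(2) by (simp add: closed_Int)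
  then have "complete S" by (simp add: complete_eq_closed)
  then obtain u where u: "u \<in> S" "f u = u"
    using Banach_fix[of S kappa f] zeroS kappa maps contr by (auto simp: dist_norm)
  show ?thesis
  proof (intro bexI ballI)
    show "u \<in> Y" using u unfolding S_def by simp
    fix v assume "v \<in> Y"
    from fprop(2)[OF this, of u] u(2) d0 show "A u v = F v" by simp
  qed
qed

lemma galerkin_sol_prop:
  fixes A :: "'a::{real_inner, complete_space} \<Rightarrow> 'a \<Rightarrow> real" and F :: "'a \<Rightarrow> real"
  assumes A_dual: "\<And>v. bounded_linear (A v)"
    and F_dual: "bounded_linear F"
    and SM_alpha: "alpha > 0"
    and SM: "\<And>v w. alpha * (norm (v - w))\<^sup>2 \<le> A v (v - w) - A w (v - w)"
    and LIP: "\<And>th. th > 0 \<Longrightarrow> Lip th > 0 \<and>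
       (\<forall>v w phi. max (norm v) (norm (v - w)) \<le> th \<longrightarrow>
          A v phi - A w phi \<le> Lip th * norm (v - w) * norm phi)"
    and Y: "\<exists>B. finite B \<and> Y = span B"
  shows "galerkin_sol A F Y \<in> Y \<and> (\<forall>v\<in>Y. A (galerkin_sol A F Y) v = F v)"
proof -
  obtain u where u: "u \<in> Y" "\<forall>v\<in>Y. A u v = F v"
    using galerkin_exists[OF A_dual F_dual SM_alpha SM LIP Y] by blast
  have Ysub: "subspace Y" using Y by auto
  have uniq: "u' = u" if "u' \<in> Y" "\<forall>v\<in>Y. A u' v = F v" for u'
  proof -
    have d: "u' - u \<in> Y" using that(1) u(1) Ysub by (simp add: subspace_diff)
    have "alpha * (norm (u' - u))\<^sup>2 \<le> A u' (u' - u) - A u (u' - u)" by (rule SM)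
    also have "\<dots> = 0" using that(2) u(2) d by simp
    finally have "(norm (u' - u))\<^sup>2 \<le> 0" using SM_alpha
      by (simp add: mult_le_0_iff)
    then show ?thesis by simp
  qed
  have "galerkin_sol A F Y = u"
    unfolding galerkin_sol_def
  proof (rule the_equality)
    show "u \<in> Y \<and> (\<forall>v\<in>Y. A u v = F v)" using u by blast
    show "\<And>x. x \<in> Y \<and> (\<forall>v\<in>Y. A x v = F v) \<Longrightarrow> x = u" using uniq by blast
  qed
  then show ?thesis using u by simp
qed

lemma seg_norm:
  fixes x y :: "'a::real_normed_vector"
  assumes "0 \<le> t" "t \<le> 1"
  shows "norm (x + t *\<^sub>R (y - x)) \<le> (1 - t) * norm x + t * norm y"
proof -
  have "x + t *\<^sub>R (y - x) = (1 - t) *\<^sub>R x + t *\<^sub>R y" by (simp add: algebra_simps)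
  then have "norm (x + t *\<^sub>R (y - x)) \<le> norm ((1 - t) *\<^sub>R x) + norm (t *\<^sub>R y)"
    by (metis norm_triangle_ineq)
  then show ?thesis using assms by simp
qed

lemma contraction_step:
  fixes A :: "'a::real_inner \<Rightarrow> 'a \<Rightarrow> real" and P F :: "'a \<Rightarrow> real"
  assumes POT: "\<And>v w. ((\<lambda>t. (P (w + t *\<^sub>R v) - P w) / t) \<longlongrightarrow> A w v) (at 0)"
    and F_dual: "bounded_linear F"
    and A_dual: "\<And>v. bounded_linear (A v)"
    and SM_alpha: "alpha > 0"
    and SM: "\<And>v w. alpha * (norm (v - w))\<^sup>2 \<le> A v (v - w) - A w (v - w)"
    and L2: "L2 > 0" "\<forall>v w phi. max (norm v) (norm (v - w)) \<le> 2 * tau \<longrightarrow> A v phi - A w phi \<le> L2 * norm (v - w) * norm phi"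
    and L5: "L5 > 0" "\<forall>v w phi. max (norm v) (norm (v - w)) \<le> 5 * tau \<longrightarrow> A v phi - A w phi \<le> L5 * norm (v - w) * norm phi"
    and Ysub: "subspace Y"
    and us: "us \<in> Y" "\<And>v. v \<in> Y \<Longrightarrow> A us v = F v"
    and wY: "w \<in> Y" and wb: "norm (w - us) + norm us \<le> tau"
    and Phi: "Phi \<in> Y" "\<And>v. v \<in> Y \<Longrightarrow> inner Phi v = inner w v + delta * (F v - A w v)"
    and zY: "z \<in> Y" and zq: "norm (Phi - z) \<le> q * norm (Phi - w)"
    and q: "0 \<le> q" "q \<le> qm" "qm \<le> 1 / 3"
    and delta: "0 < delta" "delta * L5 < 1" "delta * L2 \<le> 2"
  shows "(P z - F z) - (P us - F us) \<le> (1 - (1 / delta - L5) * (1 - qm)\<^sup>2 * delta\<^sup>2 * alpha\<^sup>2 / L2) * ((P w - F w) - (P us - F us))"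
proof -
  define e where "e = Phi - w"
  define r where "r = z - Phi"
  define d where "d = z - w"
  have de: "d = e + r" unfolding d_def e_def r_def by simp
  have eY: "e \<in> Y" unfolding e_def using Phi(1) wY Ysub by (simp add: subspace_diff)
  have dY: "d \<in> Y" unfolding d_def using zY wY Ysub by (simp add: subspace_diff)
  have wuY: "w - us \<in> Y" using us(1) wY Ysub by (simp add: subspace_diff)
  have e_prop: "inner e v = delta * (F v - A w v)" if "v \<in> Y" for v
    unfolding e_def using Phi(2)[OF that] by (simp add: inner_diff_left)
  have Fl: "linear F" using F_dual bounded_linear.linear by blast
  have Al: "linear (A v)" for v using A_dual bounded_linear.linear by blast
  have tau0: "0 \<le> tau" using wb by (smt (verit) norm_ge_zero)
  have "(norm e)\<^sup>2 = delta * (A us e - A w e)"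
    using e_prop[OF eY] us(2)[OF eY] by (simp add: power2_norm_eq_inner)
  also have "\<dots> \<le> delta * (L2 * norm (us - w) * norm e)"
  proof -
    have "max (norm us) (norm (us - w)) \<le> 2 * tau"
      using wb norm_minus_commute[of us w] tau0 by (smt (verit) norm_ge_zero)
    then have "A us e - A w e \<le> L2 * norm (us - w) * norm e" using L2(2) by blast
    then show ?thesis using delta(1) by (intro mult_left_mono) auto
  qed
  finally have "(norm e)\<^sup>2 \<le> (delta * L2) * norm (w - us) * norm e"
    by (simp add: norm_minus_commute mult.assoc)
  then have eb: "norm e \<le> (delta * L2) * norm (w - us)"
    using delta L2 by (cases "norm e = 0") (auto simp: power2_eq_square)
  have eb2: "norm e \<le> 2 * norm (w - us)"
    using eb delta(3) by (meson mult_right_mono norm_ge_zero order_trans)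
  have ec: "alpha * delta * norm (w - us) \<le> norm e"
  proof -
    have "alpha * (norm (w - us))\<^sup>2 \<le> A w (w - us) - A us (w - us)" by (rule SM)
    also have "\<dots> = - inner e (w - us) / delta"
      using e_prop[OF wuY] us(2)[OF wuY] delta(1) by simp
    also have "\<dots> \<le> norm e * norm (w - us) / delta"
    proof -
      have "- inner e (w - us) \<le> norm e * norm (w - us)"
        using Cauchy_Schwarz_ineq2[of e "w - us"] by linarith
      then show ?thesis using delta(1) by (intro divide_right_mono) auto
    qed
    finally have "alpha * delta * (norm (w - us))\<^sup>2 \<le> norm e * norm (w - us)"
      using delta(1) by (simp add: field_simps)
    then show ?thesis
      by (cases "norm (w - us) = 0") (auto simp: power2_eq_square)
  qed
  have rb: "norm r \<le> q * norm e" using zq unfolding r_def e_def by (simp add: norm_minus_commute)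
  have qle: "q \<le> 1 / 3" using q by simp
  have db: "norm d \<le> 4 / 3 * norm e"
  proof -
    have "norm d \<le> norm e + norm r" unfolding de by (rule norm_triangle_ineq)
    also have "\<dots> \<le> norm e + 1 / 3 * norm e"
      using rb qle by (smt (verit) mult_right_mono norm_ge_zero)
    finally show ?thesis by simp
  qed
  have dlow: "(1 - q) * norm e \<le> norm d"
  proof -
    have "norm e \<le> norm d + norm r"
      using norm_triangle_ineq4[of d r] unfolding de by simp
    then show ?thesis using rb by (simp add: algebra_simps)
  qed
  have up: "(P z - F z) - (P w - F w) \<le> (A w d - F d) + L5 / 2 * (norm d)\<^sup>2"
  proof -
    have ndt: "norm d \<le> 8 / 3 * tau"
      using db eb2 wb norm_ge_zero[of us] by linarith
    have "(P (w + d) - F (w + d)) - (P w - F w) \<le> (A w d - F d) + L5 / 2 * (norm d)\<^sup>2"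
    proof (rule energy_upper[OF POT F_dual L5(2)])
      fix t :: real assume t: "0 \<le> t" "t \<le> 1"
      have "norm (w + t *\<^sub>R d) \<le> norm w + norm (t *\<^sub>R d)" by (rule norm_triangle_ineq)
      also have "\<dots> \<le> tau + norm d"
        using t wb norm_triangle_ineq[of "w - us" us]
        by (smt (verit) mult_left_le_one_le norm_ge_zero norm_scaleR diff_add_cancel)
      finally show "norm (w + t *\<^sub>R d) \<le> 5 * tau" using ndt tau0 by simp
    next
      show "norm d \<le> 5 * tau" using ndt tau0 by simp
    qed
    then show ?thesis unfolding d_def by simp
  qed
  have Awd: "A w d - F d = - inner e d / delta"
    using e_prop[OF dY] delta(1) by simp
  have c1: "1 / delta - L5 > 0" using delta L5 by (simp add: field_simps)
  have ied: "inner e d = ((norm e)\<^sup>2 + (norm d)\<^sup>2 - (norm r)\<^sup>2) / 2"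
  proof -
    have "r = d - e" using de by simp
    then have "(norm r)\<^sup>2 = (norm d)\<^sup>2 - 2 * inner e d + (norm e)\<^sup>2"
      by (simp add: power2_norm_eq_inner inner_diff_left inner_diff_right inner_commute)
    then show ?thesis by simp
  qed
  have rle: "(norm r)\<^sup>2 \<le> (norm e)\<^sup>2"
  proof -
    have "q * norm e \<le> norm e" using qle q(1) by (intro mult_left_le_one_le) auto
    then have "norm r \<le> norm e" using rb by linarith
    then show ?thesis by (intro power_mono) auto
  qed
  have qm0: "1 - qm \<ge> 0" using q by simp
  have dlow2: "(1 - qm)\<^sup>2 * (norm e)\<^sup>2 \<le> (norm d)\<^sup>2"
  proof -
    have "(1 - qm) * norm e \<le> (1 - q) * norm e" using q by (intro mult_right_mono) auto
    also have "\<dots> \<le> norm d" by (rule dlow)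
    finally have "(1 - qm) * norm e \<le> norm d" .
    then have "((1 - qm) * norm e)\<^sup>2 \<le> (norm d)\<^sup>2"
      using qm0 by (intro power_mono) auto
    then show ?thesis by (simp add: power_mult_distrib)
  qed
  have step: "(P z - F z) - (P w - F w) \<le> - (1 / 2) * ((1 / delta - L5) * (1 - qm)\<^sup>2) * (norm e)\<^sup>2"
  proof -
    have "(A w d - F d) + L5 / 2 * (norm d)\<^sup>2
        = - (1 / (2 * delta)) * ((norm e)\<^sup>2 - (norm r)\<^sup>2) - (1 / 2) * (1 / delta - L5) * (norm d)\<^sup>2"
      unfolding Awd ied using delta(1) by (simp add: field_simps)
    also have "\<dots> \<le> - (1 / 2) * (1 / delta - L5) * (norm d)\<^sup>2"
      using rle delta(1) by simp
    also have "\<dots> \<le> - (1 / 2) * (1 / delta - L5) * ((1 - qm)\<^sup>2 * (norm e)\<^sup>2)"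
      using dlow2 c1 by simp
    finally show ?thesis using up by simp
  qed
  have Ew: "(P w - F w) - (P us - F us) \<le> L2 / 2 * (norm (w - us))\<^sup>2"
  proof -
    have "(P (us + (w - us)) - F (us + (w - us))) - (P us - F us) \<le> (A us (w - us) - F (w - us)) + L2 / 2 * (norm (w - us))\<^sup>2"
    proof (rule energy_upper[OF POT F_dual L2(2)])
      fix t :: real assume t: "0 \<le> t" "t \<le> 1"
      have "norm (us + t *\<^sub>R (w - us)) \<le> (1 - t) * norm us + t * norm w" by (rule seg_norm[OF t])
      also have "\<dots> \<le> (1 - t) * tau + t * tau"
        using t wb norm_triangle_ineq[of "w - us" us]
        by (intro add_mono mult_left_mono) (auto, smt (verit) norm_ge_zero)
      finally show "norm (us + t *\<^sub>R (w - us)) \<le> 2 * tau" using tau0 by (simp add: algebra_simps)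
    next
      show "norm (w - us) \<le> 2 * tau" using wb tau0 by (smt (verit) norm_ge_zero)
    qed
    then show ?thesis using us(2)[OF wuY] by simp
  qed
  define c0 where "c0 = (1 / delta - L5) * (1 - qm)\<^sup>2"
  have c0: "c0 \<ge> 0" unfolding c0_def using c1 by simp
  have "(norm e)\<^sup>2 \<ge> (alpha * delta)\<^sup>2 * (norm (w - us))\<^sup>2"
  proof -
    have "(alpha * delta * norm (w - us))\<^sup>2 \<le> (norm e)\<^sup>2"
      using ec SM_alpha delta(1) by (intro power_mono) auto
    then show ?thesis by (simp add: power_mult_distrib)
  qed
  then have i1: "c0 * (norm e)\<^sup>2 \<ge> c0 * ((alpha * delta)\<^sup>2 * (norm (w - us))\<^sup>2)"
    using c0 by (intro mult_left_mono) auto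
  define Dw where "Dw = (P w - F w) - (P us - F us)"
  have "(norm (w - us))\<^sup>2 \<ge> 2 / L2 * Dw"
    using Ew L2(1) unfolding Dw_def by (simp add: field_simps)
  then have i2: "c0 * ((alpha * delta)\<^sup>2 * (norm (w - us))\<^sup>2) \<ge> c0 * ((alpha * delta)\<^sup>2 * (2 / L2 * Dw))"
    using c0 by (intro mult_left_mono) auto
  define K where "K = c0 * alpha\<^sup>2 * delta\<^sup>2 / L2"
  have i3: "c0 * ((alpha * delta)\<^sup>2 * (2 / L2 * Dw)) = 2 * K * Dw"
    unfolding K_def by (simp add: power_mult_distrib)
  have st: "(P z - F z) - (P w - F w) \<le> - (1 / 2) * (c0 * (norm e)\<^sup>2)"
    using step unfolding c0_def by simp
  have key: "(P z - F z) - (P w - F w) \<le> - K * Dw"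
    using st i1 i2 i3 by linarith
  have "1 - (1 / delta - L5) * (1 - qm)\<^sup>2 * delta\<^sup>2 * alpha\<^sup>2 / L2 = 1 - K"
    unfolding K_def c0_def by simp
  then show ?thesis using key unfolding Dw_def by (simp add: algebra_simps)
qed

theorem lemma12:
  fixes A :: "'a::{real_inner, complete_space} \<Rightarrow> 'a \<Rightarrow> real"
    and F :: "'a \<Rightarrow> real" and P :: "'a \<Rightarrow> real"
    and alpha :: real and Lip :: "real \<Rightarrow> real" and Cstab :: "real \<Rightarrow> real"
    and T0 :: 'm and elems :: "'m \<Rightarrow> 't set" and refine :: "'m \<Rightarrow> 't set \<Rightarrow> 'm"
    and XS :: "'m \<Rightarrow> 'a set" and eta :: "'m \<Rightarrow> 't \<Rightarrow> 'a \<Rightarrow> real"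
    and Psi :: "'m \<Rightarrow> ('a \<Rightarrow> real) \<Rightarrow> 'a \<Rightarrow> 'a" and qalg :: real
    and delta theta Cmark lam_lin lam_alg :: real and imin :: nat and u00 :: 'a
    and Tm :: "nat \<Rightarrow> 'm" and Mk :: "nat \<Rightarrow> 't set" and u :: "nat \<Rightarrow> nat \<Rightarrow> nat \<Rightarrow> 'a"
    and kbar :: "nat \<Rightarrow> nat" and ibar :: "nat \<Rightarrow> nat \<Rightarrow> nat" and L :: nat
    and Mb tau qE2 lam_star theta_mark :: real
  \<comment> \<open>operator A : X \<rightarrow> X', right-hand side F \<in> X', A 0 \<noteq> F\<close>
  assumes A_dual: "\<And>v. bounded_linear (A v)"
    and F_dual: "bounded_linear F"
    and A0F: "A 0 \<noteq> F"
  \<comment> \<open>(SM)\<close>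
    and SM_alpha: "alpha > 0"
    and SM: "\<And>v w. alpha * (norm (v - w))\<^sup>2 \<le> A v (v - w) - A w (v - w)"
  \<comment> \<open>(LIP)\<close>
    and LIP: "\<And>th. th > 0 \<Longrightarrow> Lip th > 0 \<and>
       (\<forall>v w phi. max (norm v) (norm (v - w)) \<le> th \<longrightarrow>
          A v phi - A w phi \<le> Lip th * norm (v - w) * norm phi)"
  \<comment> \<open>(POT)\<close>
    and POT: "\<And>v w. ((\<lambda>t. (P (w + t *\<^sub>R v) - P w) / t) \<longlongrightarrow> A w v) (at 0)"
  \<comment> \<open>meshes and discrete spaces\<close>
    and elems_finite: "\<And>H. refines refine elems T0 H \<Longrightarrow> finite (elems H)"
    and XS_fin_dim: "\<And>H. refines refine elems T0 H \<Longrightarrow> \<exists>B. finite B \<and> XS H = span B"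
    and XS_nested: "\<And>H h. refines refine elems T0 H \<Longrightarrow> refines refine elems H h \<Longrightarrow> XS H \<subseteq> XS h"
  \<comment> \<open>algebraic solver\<close>
    and qalg: "0 < qalg" "qalg < 1"
    and Psi_maps: "\<And>H phi w. refines refine elems T0 H \<Longrightarrow> w \<in> XS H \<Longrightarrow> Psi H phi w \<in> XS H"
    and Psi_contr: "\<And>H phi w. refines refine elems T0 H \<Longrightarrow> bounded_linear phi \<Longrightarrow> w \<in> XS H \<Longrightarrow>
       norm (riesz_sol (XS H) phi - Psi H phi w) \<le> qalg * norm (riesz_sol (XS H) phi - w)"
  \<comment> \<open>estimator and stability axiom (A1)\<close>
    and eta_nonneg: "\<And>H T v. eta H T v \<ge> 0"
    and A1: "\<And>th. th > 0 \<Longrightarrow> Cstab th > 0 \<and>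
       (\<forall>H h U vh vH. refines refine elems T0 H \<longrightarrow> refines refine elems H h \<longrightarrow>
          U \<subseteq> elems h \<inter> elems H \<longrightarrow> vh \<in> XS h \<longrightarrow> vH \<in> XS H \<longrightarrow>
          max (norm vh) (norm (vh - vH)) \<le> th \<longrightarrow>
          \<bar>eta_set eta h U vh - eta_set eta H U vH\<bar> \<le> Cstab th * norm (vh - vH))"
  \<comment> \<open>constants\<close>
    and Mb_def: "Mb = onorm (\<lambda>v. F v - A 0 v) / alpha"
    and tau_def: "tau = Mb + 3 * Mb * sqrt (Lip (3 * Mb) / alpha)"
    and imin: "qalg ^ imin \<le> 1 / 3"
    and delta: "0 < delta" "delta < min (1 / Lip (5 * tau)) (2 * alpha / (Lip (2 * tau))\<^sup>2)"
    and qE2_def: "qE2 = 1 - (1 / delta - Lip (5 * tau)) * (1 - qalg ^ imin)\<^sup>2 * delta\<^sup>2 * alpha\<^sup>2 / Lip (2 * tau)"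
    and lam_star_def: "lam_star = min 1 (sqrt (alpha * (1 - qE2) / (2 * qE2)) / Cstab (3 * Mb))"
    and theta_mark_def: "theta_mark = (sqrt theta + lam_lin / lam_star)\<^sup>2 / (1 - lam_lin / lam_star)\<^sup>2"
  \<comment> \<open>algorithm parameters and the run\<close>
    and theta: "0 < theta" "theta \<le> 1"
    and Cmark: "Cmark \<ge> 1"
    and lam: "lam_lin > 0" "lam_alg > 0"
    and u00: "u00 \<in> XS T0" "norm u00 \<le> 2 * Mb"
    and run: "ailfem_run T0 elems refine eta Psi A F P delta theta Cmark lam_lin lam_alg imin Mb u00
                Tm Mk u kbar ibar L"
  shows
    "eta_set eta (Tm L) (elems (Tm L)) (galerkin_sol A F (XS (Tm L)))
       \<le> (1 + lam_lin / lam_star) * eta_set eta (Tm L) (elems (Tm L)) (u L (kbar L) (ibar L (kbar L)))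
     \<and> (lam_lin < lam_star \<longrightarrow>
          (1 - lam_lin / lam_star) * eta_set eta (Tm L) (elems (Tm L)) (u L (kbar L) (ibar L (kbar L)))
            \<le> eta_set eta (Tm L) (elems (Tm L)) (galerkin_sol A F (XS (Tm L))))
     \<and> (lam_lin < lam_star \<longrightarrow>
          (\<forall>R. R \<subseteq> elems (Tm L) \<longrightarrow>
             theta_mark * (eta_set eta (Tm L) (elems (Tm L)) (galerkin_sol A F (XS (Tm L))))\<^sup>2
               \<le> (eta_set eta (Tm L) R (galerkin_sol A F (XS (Tm L))))\<^sup>2 \<longrightarrow>
             theta * (eta_set eta (Tm L) (elems (Tm L)) (u L (kbar L) (ibar L (kbar L))))\<^sup>2
               \<le> (eta_set eta (Tm L) R (u L (kbar L) (ibar L (kbar L))))\<^sup>2))"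
proof -
  note R = run[unfolded ailfem_run_def Let_def]
  have R1: "Tm 0 = T0" using R by blast
  have R2: "u 0 0 0 = u00" using R by blast
  have R3: "\<And>l. l < L \<Longrightarrow> u (Suc l) 0 0 = u l (kbar l) (ibar l (kbar l))" using R by blast
  have R4: "\<And>l. l \<le> L \<Longrightarrow> ibar l 0 = 0 \<and> 1 \<le> kbar l" using R by blast
  have R5: "\<And>l k. l \<le> L \<Longrightarrow> k \<in> {1..kbar l} \<Longrightarrow> u l k 0 = u l (k - 1) (ibar l (k - 1)) \<and> 1 \<le> ibar l k \<and>
      (\<forall>i\<in>{1..ibar l k}. u l k i = Psi (Tm l) (zar_rhs A F delta (u l (k - 1) (ibar l (k - 1)))) (u l k (i - 1)))"
    using R by blast
  have R6: "\<And>l k i. l \<le> L \<Longrightarrow> k \<in> {1..kbar l} \<Longrightarrow> i \<in> {1..ibar l k} \<Longrightarrow>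
      (norm (u l k (i - 1) - u l k i) \<le> lam_alg * (lam_lin * eta_set eta (Tm l) (elems (Tm l)) (u l k i) + norm (u l k i - u l k 0))
        \<and> imin \<le> i) = (i = ibar l k)"
    using R by blast
  have R7: "\<And>l k. l \<le> L \<Longrightarrow> k \<in> {1..kbar l} \<Longrightarrow>
      (P (u l k 0) - F (u l k 0) - (P (u l k (ibar l k)) - F (u l k (ibar l k)))
         \<le> lam_lin\<^sup>2 * (eta_set eta (Tm l) (elems (Tm l)) (u l k (ibar l k)))\<^sup>2 \<and>
       norm (u l k (ibar l k)) \<le> 2 * Mb) = (k = kbar l)"
    using R by blast
  have R8: "\<And>l. l < L \<Longrightarrow> Mk l \<subseteq> elems (Tm l) \<and> Tm (Suc l) = refine (Tm l) (Mk l)"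
    using R by blast
  have ref: "refines refine elems T0 (Tm l)" if "l \<le> L" for l
    using that
  proof (induction l)
    case 0 then show ?case using R1 refines.refl by simp
  next
    case (Suc l)
    then have l: "l < L" by simp
    have "refines refine elems T0 (refine (Tm l) (Mk l))"
      using refines.step[OF Suc.IH] l R8[OF l] by simp
    then show ?case using R8[OF l] by simp
  qed
  have Yfin: "\<exists>B. finite B \<and> XS (Tm l) = span B" if "l \<le> L" for l
    using XS_fin_dim[OF ref[OF that]] .
  have memb: "u l k i \<in> XS (Tm l)"
    if l: "l \<le> L" and u0: "u l 0 0 \<in> XS (Tm l)" and k: "k \<le> kbar l" and i: "i \<le> ibar l k" for l k i
  proof -
    have "\<forall>i \<le> ibar l k. u l k i \<in> XS (Tm l)" if "k \<le> kbar l" for k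
      using that
    proof (induction k)
      case 0 then show ?case using R4[OF l] u0 by simp
    next
      case (Suc k)
      have k1: "Suc k \<in> {1..kbar l}" using Suc.prems by simp
      have prev: "u l k (ibar l k) \<in> XS (Tm l)" using Suc.IH Suc.prems by simp
      note r5 = R5[OF l k1]
      show ?case
      proof (intro allI impI)
        fix i show "i \<le> ibar l (Suc k) \<Longrightarrow> u l (Suc k) i \<in> XS (Tm l)"
        proof (induction i)
          case 0 then show ?case using r5 prev by simp
        next
          case (Suc i)
          then have "Suc i \<in> {1..ibar l (Suc k)}" by simp
          then have "u l (Suc k) (Suc i) = Psi (Tm l) (zar_rhs A F delta (u l k (ibar l k))) (u l (Suc k) i)"
            using r5 by fastforce
          then show ?case using Psi_maps[OF ref[OF l]] Suc by simp
        qed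
      qed
    qed
    then show ?thesis using k i by blast
  qed
  have u0mem: "u l 0 0 \<in> XS (Tm l)" if "l \<le> L" for l
    using that
  proof (induction l)
    case 0 then show ?case using R1 R2 u00 by simp
  next
    case (Suc l)
    then have l: "l < L" "l \<le> L" by auto
    have "u l (kbar l) (ibar l (kbar l)) \<in> XS (Tm l)"
      using memb[OF l(2) Suc.IH[OF l(2)]] by simp
    moreover have "refines refine elems (Tm l) (refine (Tm l) (Mk l))"
      using R8[OF l(1)] by (intro refines.step[OF refines.refl]) auto
    then have "refines refine elems (Tm l) (Tm (Suc l))" using R8[OF l(1)] by simp
    then have "XS (Tm l) \<subseteq> XS (Tm (Suc l))" using XS_nested[OF ref[OF l(2)]] by blast
    ultimately show ?case using R3[OF l(1)] by auto
  qed
  have w0n: "norm (u L 0 0) \<le> 2 * Mb"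
  proof (cases L)
    case 0 then show ?thesis using R2 u00 by simp
  next
    case (Suc l)
    then have l: "l < L" "l \<le> L" by auto
    have "kbar l \<in> {1..kbar l}" using R4[OF l(2)] by simp
    from R7[OF l(2) this] have "norm (u l (kbar l) (ibar l (kbar l))) \<le> 2 * Mb" by simp
    then show ?thesis using R3[OF l(1)] Suc by simp
  qed
  have Fl: "linear F" using F_dual bounded_linear.linear by blast
  have Al: "linear (A v)" for v using A_dual bounded_linear.linear by blast
  define Kf where "Kf = onorm (\<lambda>v. F v - A 0 v)"
  have blK: "bounded_linear (\<lambda>v. F v - A 0 v)"
    using A_dual F_dual by (intro bounded_linear_sub)
  have Kf: "\<bar>F v - A 0 v\<bar> \<le> Kf * norm v" for v
    using onorm[OF blK, of v] unfolding Kf_def by simp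
  obtain v0 where v0: "A 0 v0 \<noteq> F v0" using A0F by (auto simp: fun_eq_iff)
  have v0nz: "v0 \<noteq> 0"
  proof
    assume "v0 = 0"
    then show False using v0 real_vector.linear_0[OF Fl] real_vector.linear_0[OF Al[of 0]] by simp
  qed
  have "(\<lambda>v. F v - A 0 v) \<noteq> (\<lambda>v. 0)" using v0 by (metis right_minus_eq)
  then have Kpos: "Kf > 0" unfolding Kf_def using onorm_pos_lt[OF blK] v0 by (metis (mono_tags))
  have Mpos: "Mb > 0" unfolding Mb_def Kf_def[symmetric] using Kpos SM_alpha by simp
  have alphaL: "alpha \<le> Lip th" if th: "th > 0" for th
  proof -
    define y where "y = (th / norm v0) *\<^sub>R v0"
    have ny: "norm y = th" unfolding y_def using v0nz th by simp
    have "alpha * th\<^sup>2 \<le> A y (y - 0) - A 0 (y - 0)" using SM[of y 0] ny by simp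
    also have "\<dots> \<le> Lip th * norm (y - 0) * norm (y - 0)"
    proof -
      have "max (norm y) (norm (y - 0)) \<le> th" using ny by simp
      then show ?thesis using LIP[OF th] by blast
    qed
    also have "\<dots> = Lip th * th\<^sup>2" using ny by (simp add: power2_eq_square)
    finally show ?thesis using th by simp
  qed
  have "Lip (3 * Mb) > 0" using LIP[of "3 * Mb"] Mpos by simp
  then have "0 \<le> sqrt (Lip (3 * Mb) / alpha)" using SM_alpha by simp
  then have tauM: "Mb \<le> tau" unfolding tau_def using Mpos by simp
  have taupos: "tau > 0" using tauM Mpos by simp
  define L2 where "L2 = Lip (2 * tau)"
  define L3 where "L3 = Lip (3 * Mb)"
  define L5 where "L5 = Lip (5 * tau)"
  have L2: "L2 > 0" "\<forall>v w phi. max (norm v) (norm (v - w)) \<le> 2 * tau \<longrightarrow> A v phi - A w phi \<le> L2 * norm (v - w) * norm phi"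
    using LIP[of "2 * tau"] taupos unfolding L2_def by auto
  have L3: "L3 > 0" "\<forall>v w phi. max (norm v) (norm (v - w)) \<le> 3 * Mb \<longrightarrow> A v phi - A w phi \<le> L3 * norm (v - w) * norm phi"
    using LIP[of "3 * Mb"] Mpos unfolding L3_def by auto
  have L5: "L5 > 0" "\<forall>v w phi. max (norm v) (norm (v - w)) \<le> 5 * tau \<longrightarrow> A v phi - A w phi \<le> L5 * norm (v - w) * norm phi"
    using LIP[of "5 * tau"] taupos unfolding L5_def by auto
  have aL2: "alpha \<le> L2" unfolding L2_def using alphaL taupos by simp
  have aL5: "alpha \<le> L5" unfolding L5_def using alphaL taupos by simp
  have dL5: "delta * L5 < 1"
  proof -
    have "delta < 1 / L5" using delta(2) unfolding L5_def by simp
    then show ?thesis using L5(1) by (simp add: field_simps)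
  qed
  have dL2: "delta * L2 \<le> 2"
  proof -
    have "delta < 2 * alpha / L2\<^sup>2" using delta(2) unfolding L2_def by simp
    then have "delta * L2 < 2 * alpha / L2" using L2(1) by (simp add: field_simps power2_eq_square)
    also have "\<dots> \<le> 2" using aL2 L2(1) by (simp add: field_simps)
    finally show ?thesis by simp
  qed
  define qm where "qm = qalg ^ imin"
  have qm: "0 < qm" "qm \<le> 1 / 3" unfolding qm_def using qalg imin by auto
  have qE2e: "qE2 = 1 - (1 / delta - L5) * (1 - qm)\<^sup>2 * delta\<^sup>2 * alpha\<^sup>2 / L2"
    unfolding qE2_def L5_def L2_def qm_def by simp
  define cq where "cq = (1 / delta - L5) * (1 - qm)\<^sup>2 * delta\<^sup>2 * alpha\<^sup>2 / L2"
  have cq_pos: "cq > 0"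
  proof -
    have "1 / delta - L5 > 0" using dL5 delta(1) by (simp add: field_simps)
    moreover have "(1 - qm)\<^sup>2 > 0" using qm by simp
    ultimately show ?thesis unfolding cq_def using delta(1) SM_alpha L2(1) by simp
  qed
  have cq_lt: "cq < 1"
  proof -
    have e1: "(1 / delta - L5) * delta\<^sup>2 = delta * (1 - delta * L5)"
      using delta(1) by (simp add: field_simps power2_eq_square)
    have e2: "cq = ((1 / delta - L5) * delta\<^sup>2) * (1 - qm)\<^sup>2 * (alpha * (alpha / L2))"
      unfolding cq_def by (simp add: power2_eq_square)
    have e: "cq = (delta * (1 - delta * L5)) * (1 - qm)\<^sup>2 * (alpha * (alpha / L2))"
      using e1 e2 by simp
    have f1: "delta * (1 - delta * L5) \<le> delta" using delta(1) L5(1) by (simp add: mult_left_le)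
    have f2: "(1 - qm)\<^sup>2 \<le> 1" using qm by (simp add: power_le_one)
    have "alpha / L2 \<le> 1" using aL2 L2(1) by simp
    then have f3: "alpha * (alpha / L2) \<le> alpha" using SM_alpha mult_left_le[of "alpha / L2" alpha] by linarith
    have "cq \<le> delta * 1 * alpha"
      unfolding e using f1 f2 f3 dL5 delta(1) SM_alpha L2(1) qm
      by (intro mult_mono) (auto intro!: mult_nonneg_nonneg)
    also have "\<dots> \<le> delta * L5" using aL5 delta(1) by simp
    finally show ?thesis using dL5 by simp
  qed
  have qE2: "0 < qE2" "qE2 < 1" using qE2e cq_pos cq_lt unfolding cq_def by auto
  define Y where "Y = XS (Tm L)"
  have refL: "refines refine elems T0 (Tm L)" using ref by simp
  have YfinL: "\<exists>B. finite B \<and> Y = span B" unfolding Y_def using Yfin by simp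
  have Ysub: "subspace Y" using YfinL by auto
  define us where "us = galerkin_sol A F Y"
  have us: "us \<in> Y" "\<And>v. v \<in> Y \<Longrightarrow> A us v = F v"
    using galerkin_sol_prop[OF A_dual F_dual SM_alpha SM LIP YfinL] unfolding us_def by auto
  have usM: "norm us \<le> Mb"
  proof -
    have "alpha * (norm us)\<^sup>2 \<le> A us (us - 0) - A 0 (us - 0)" using SM[of us 0] by simp
    also have "\<dots> = F us - A 0 us" using us by simp
    also have "\<dots> \<le> Kf * norm us" using Kf[of us] by simp
    finally have "alpha * (norm us)\<^sup>2 \<le> Kf * norm us" .
    then have "alpha * norm us \<le> Kf"
      by (cases "norm us = 0") (use Kpos in \<open>auto simp: power2_eq_square\<close>)
    then show ?thesis unfolding Mb_def Kf_def[symmetric] using SM_alpha by (simp add: field_simps)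
  qed
  define w where "w = (\<lambda>k. u L k (ibar L k))"
  have u0L: "u L 0 0 \<in> Y" unfolding Y_def using u0mem by simp
  have w0: "w 0 = u L 0 0" unfolding w_def using R4[of L] by simp
  have wY: "w k \<in> Y" if "k \<le> kbar L" for k
    unfolding w_def Y_def using memb[OF order_refl u0mem[OF order_refl] that order_refl] .
  define E where "E = (\<lambda>v. P v - F v)"
  have Elow: "alpha / 2 * (norm (v - us))\<^sup>2 \<le> E v - E us" if "v \<in> Y" for v
  proof -
    have vY: "v - us \<in> Y" using that us(1) Ysub by (simp add: subspace_diff)
    have "(A us (v - us) - F (v - us)) + alpha / 2 * (norm (v - us))\<^sup>2
        \<le> (P (us + (v - us)) - F (us + (v - us))) - (P us - F us)"
      by (rule energy_lower[OF POT F_dual A_dual SM])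
    then show ?thesis using us(2)[OF vY] unfolding E_def by simp
  qed
  define D0 where "D0 = E (w 0) - E us"
  have D0b: "D0 \<le> L3 / 2 * (3 * Mb)\<^sup>2"
  proof -
    have w0n': "norm (w 0) \<le> 2 * Mb" using w0 w0n by simp
    have dn: "norm (w 0 - us) \<le> 3 * Mb"
      using norm_triangle_ineq4[of "w 0" us] w0n' usM by simp
    have wus: "w 0 - us \<in> Y" using wY[of 0] us(1) Ysub by (simp add: subspace_diff)
    have "(P (us + (w 0 - us)) - F (us + (w 0 - us))) - (P us - F us)
        \<le> (A us (w 0 - us) - F (w 0 - us)) + L3 / 2 * (norm (w 0 - us))\<^sup>2"
    proof (rule energy_upper[OF POT F_dual L3(2)])
      fix t :: real assume t: "0 \<le> t" "t \<le> 1"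
      have "norm (us + t *\<^sub>R (w 0 - us)) \<le> (1 - t) * norm us + t * norm (w 0)" by (rule seg_norm[OF t])
      also have "\<dots> \<le> (1 - t) * Mb + t * (2 * Mb)"
        using t usM w0n' by (intro add_mono mult_left_mono) auto
      also have "\<dots> \<le> 3 * Mb" using t Mpos by (simp add: algebra_simps)
      finally show "norm (us + t *\<^sub>R (w 0 - us)) \<le> 3 * Mb" .
    qed (rule dn)
    then have "D0 \<le> L3 / 2 * (norm (w 0 - us))\<^sup>2" using us(2)[OF wus] unfolding D0_def E_def by simp
    also have "\<dots> \<le> L3 / 2 * (3 * Mb)\<^sup>2"
      using dn L3(1) by (intro mult_left_mono power_mono) auto
    finally show ?thesis .
  qed
  have bound: "norm (v - us) + norm us \<le> tau" if v: "v \<in> Y" "E v - E us \<le> D0" for v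
  proof -
    have "alpha / 2 * (norm (v - us))\<^sup>2 \<le> L3 / 2 * (3 * Mb)\<^sup>2" using Elow[OF v(1)] v(2) D0b by simp
    then have "(norm (v - us))\<^sup>2 \<le> (3 * Mb)\<^sup>2 * (L3 / alpha)" using SM_alpha by (simp add: field_simps)
    also have "\<dots> = (3 * Mb * sqrt (L3 / alpha))\<^sup>2"
      using L3(1) SM_alpha by (simp add: power_mult_distrib)
    finally have sq: "(norm (v - us))\<^sup>2 \<le> (3 * Mb * sqrt (L3 / alpha))\<^sup>2" .
    have "0 \<le> sqrt (L3 / alpha)" using L3(1) SM_alpha by simp
    then have "0 \<le> 3 * Mb * sqrt (L3 / alpha)" using Mpos by simp
    with sq have "norm (v - us) \<le> 3 * Mb * sqrt (L3 / alpha)" by (rule power2_le_imp_le)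
    then show ?thesis using usM unfolding tau_def L3_def by simp
  qed
  have contr: "E (w k) - E us \<le> qE2 * (E (w (k - 1)) - E us)"
    if k: "k \<in> {1..kbar L}" and wb: "norm (w (k - 1) - us) + norm us \<le> tau" for k
  proof -
    note r5 = R5[OF order_refl k]
    define phi where "phi = zar_rhs A F delta (w (k - 1))"
    define Phi where "Phi = riesz_sol Y phi"
    have blphi: "bounded_linear phi"
      unfolding phi_def zar_rhs_def using A_dual F_dual
      by (intro bounded_linear_add bounded_linear_inner_right bounded_linear_const_mult bounded_linear_sub)
    have wk1: "w (k - 1) \<in> Y" using k by (intro wY) auto
    have wkY: "w k \<in> Y" using k by (intro wY) auto
    have Phi: "Phi \<in> Y" "\<And>v. v \<in> Y \<Longrightarrow> inner Phi v = inner (w (k - 1)) v + delta * (F v - A (w (k - 1)) v)"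
      using zar_prop[of Y A "w (k - 1)" F delta, OF YfinL A_dual F_dual] unfolding Phi_def phi_def by auto
    have uk0: "u L k 0 = w (k - 1)" using r5 unfolding w_def by simp
    have memk: "u L k i \<in> Y" if "i \<le> ibar L k" for i
      unfolding Y_def using memb[OF order_refl u0mem[OF order_refl] _ that] k by simp
    have iter: "norm (Phi - u L k i) \<le> qalg ^ i * norm (Phi - w (k - 1))" if "i \<le> ibar L k" for i
      using that
    proof (induction i)
      case 0 then show ?case using uk0 by simp
    next
      case (Suc i)
      then have "Suc i \<in> {1..ibar L k}" by simp
      then have ue: "u L k (Suc i) = Psi (Tm L) phi (u L k i)"
        using r5 unfolding phi_def w_def by fastforce
      have "norm (Phi - u L k (Suc i)) \<le> qalg * norm (Phi - u L k i)"
        unfolding ue Phi_def Y_def using Psi_contr[OF refL blphi] memk[of i] Suc.prems unfolding Y_def by simp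
      also have "\<dots> \<le> qalg * (qalg ^ i * norm (Phi - w (k - 1)))"
        using Suc qalg by (intro mult_left_mono) auto
      finally show ?case by simp
    qed
    have ib1: "ibar L k \<in> {1..ibar L k}" using r5 by simp
    have ibmin: "imin \<le> ibar L k" using R6[OF order_refl k ib1] by simp
    define q where "q = qalg ^ ibar L k"
    have q: "0 \<le> q" "q \<le> qm" unfolding q_def qm_def using qalg ibmin
      by (auto intro: power_decreasing)
    have zq: "norm (Phi - w k) \<le> q * norm (Phi - w (k - 1))"
      using iter[of "ibar L k"] unfolding q_def w_def by simp
    have "(P (w k) - F (w k)) - (P us - F us) \<le> (1 - (1 / delta - L5) * (1 - qm)\<^sup>2 * delta\<^sup>2 * alpha\<^sup>2 / L2) * ((P (w (k - 1)) - F (w (k - 1))) - (P us - F us))"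
      by (rule contraction_step[OF POT F_dual A_dual SM_alpha SM L2 L5 Ysub us wk1 wb Phi wkY zq q(1) q(2) qm(2) delta(1) dL5 dL2])
    then show ?thesis unfolding E_def qE2e .
  qed
  have inv: "E (w k) - E us \<le> D0" if "k \<le> kbar L" for k
    using that
  proof (induction k)
    case 0 then show ?case unfolding D0_def by simp
  next
    case (Suc k)
    have k: "Suc k \<in> {1..kbar L}" using Suc.prems by simp
    have b: "norm (w k - us) + norm us \<le> tau" using bound wY Suc by simp
    have "E (w (Suc k)) - E us \<le> qE2 * (E (w k) - E us)" using contr[OF k] b by simp
    also have "\<dots> \<le> E (w k) - E us"
    proof -
      have "0 \<le> E (w k) - E us" using Elow[of "w k"] wY Suc.prems SM_alpha
        by (smt (verit) Suc_leD mult_nonneg_nonneg zero_le_power2 divide_nonneg_pos zero_less_numeral)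
      then show ?thesis using qE2 by (simp add: mult_left_le_one_le)
    qed
    finally show ?case using Suc by simp
  qed
  define K where "K = kbar L"
  have K1: "1 \<le> K" unfolding K_def using R4[of L] by simp
  have Kk: "K \<in> {1..kbar L}" using K1 unfolding K_def by simp
  have wKY: "w K \<in> Y" unfolding K_def using wY by simp
  have wK1Y: "w (K - 1) \<in> Y" unfolding K_def using wY by simp
  have bK1: "norm (w (K - 1) - us) + norm us \<le> tau"
    using bound[OF wK1Y inv] unfolding K_def by simp
  have cK: "E (w K) - E us \<le> qE2 * (E (w (K - 1)) - E us)" using contr[OF Kk bK1] .
  have uK0: "u L K 0 = w (K - 1)" using R5[OF order_refl Kk] unfolding w_def by simp
  define eK where "eK = eta_set eta (Tm L) (elems (Tm L)) (w K)"
  have crit: "E (w (K - 1)) - E (w K) \<le> lam_lin\<^sup>2 * eK\<^sup>2 \<and> norm (w K) \<le> 2 * Mb"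
    using R7[OF order_refl Kk] uK0 unfolding E_def eK_def w_def K_def by simp
  define dK where "dK = norm (w K - us)"
  have eK0: "0 \<le> eK" unfolding eK_def eta_set_def by (simp add: sum_nonneg)
  have Dl: "alpha / 2 * dK\<^sup>2 \<le> E (w K) - E us" unfolding dK_def using Elow[OF wKY] .
  have "(1 - qE2) * (E (w K) - E us) \<le> qE2 * (E (w (K - 1)) - E (w K))"
    using cK by (simp add: algebra_simps)
  also have "\<dots> \<le> qE2 * (lam_lin\<^sup>2 * eK\<^sup>2)" using crit qE2 by (intro mult_left_mono) auto
  finally have "(1 - qE2) * (alpha / 2 * dK\<^sup>2) \<le> qE2 * (lam_lin\<^sup>2 * eK\<^sup>2)"
    using Dl qE2 by (smt (verit) mult_left_mono)
  then have Sd: "(alpha * (1 - qE2) / (2 * qE2)) * dK\<^sup>2 \<le> (lam_lin * eK)\<^sup>2"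
    using qE2 by (simp add: field_simps power_mult_distrib)
  define S where "S = sqrt (alpha * (1 - qE2) / (2 * qE2))"
  have Spos: "S > 0" unfolding S_def using qE2 SM_alpha by simp
  have S2: "S\<^sup>2 = alpha * (1 - qE2) / (2 * qE2)" unfolding S_def using qE2 SM_alpha by simp
  have "(S * dK)\<^sup>2 \<le> (lam_lin * eK)\<^sup>2" using Sd S2 by (simp add: power_mult_distrib)
  moreover have "0 \<le> lam_lin * eK" using lam eK0 by simp
  ultimately have SdK: "S * dK \<le> lam_lin * eK" by (rule power2_le_imp_le)
  define C where "C = Cstab (3 * Mb)"
  have A1M: "C > 0 \<and> (\<forall>H h U vh vH. refines refine elems T0 H \<longrightarrow> refines refine elems H h \<longrightarrow>
          U \<subseteq> elems h \<inter> elems H \<longrightarrow> vh \<in> XS h \<longrightarrow> vH \<in> XS H \<longrightarrow>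
          max (norm vh) (norm (vh - vH)) \<le> 3 * Mb \<longrightarrow>
          \<bar>eta_set eta h U vh - eta_set eta H U vH\<bar> \<le> C * norm (vh - vH))"
    unfolding C_def using A1[of "3 * Mb"] Mpos by simp
  have Cpos: "C > 0" using A1M by simp
  have ls: "lam_star = min 1 (S / C)" unfolding lam_star_def S_def C_def by simp
  have lspos: "lam_star > 0" using ls Spos Cpos by simp
  have lsle: "lam_star \<le> S / C" using ls by simp
  define a where "a = lam_lin / lam_star"
  have a0: "0 \<le> a" unfolding a_def using lam lspos by simp
  have CdK: "C * dK \<le> a * eK"
  proof -
    have "C * dK = (C / S) * (S * dK)" using Spos by simp
    also have "\<dots> \<le> (C / S) * (lam_lin * eK)" using SdK Spos Cpos by (intro mult_left_mono) auto
    also have "\<dots> \<le> (1 / lam_star) * (lam_lin * eK)"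
    proof (intro mult_right_mono)
      show "C / S \<le> 1 / lam_star" using lsle lspos Spos Cpos by (simp add: field_simps)
      show "0 \<le> lam_lin * eK" using lam eK0 by simp
    qed
    finally show ?thesis unfolding a_def by simp
  qed
  have stab: "\<bar>eta_set eta (Tm L) U us - eta_set eta (Tm L) U (w K)\<bar> \<le> a * eK" if U: "U \<subseteq> elems (Tm L)" for U
  proof -
    have "max (norm us) (norm (us - w K)) \<le> 3 * Mb"
      using usM crit norm_triangle_ineq4[of us "w K"] Mpos by simp
    then have "\<bar>eta_set eta (Tm L) U us - eta_set eta (Tm L) U (w K)\<bar> \<le> C * norm (us - w K)"
      using A1M refL refines.refl[of refine elems "Tm L"] U us(1) wKY unfolding Y_def by blast
    also have "\<dots> = C * dK" unfolding dK_def by (simp add: norm_minus_commute)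
    finally show ?thesis using CdK by simp
  qed
  define es where "es = eta_set eta (Tm L) (elems (Tm L)) us"
  have st0: "\<bar>es - eK\<bar> \<le> a * eK" unfolding es_def eK_def using stab[of "elems (Tm L)"] by (simp add: eK_def)
  have claim1: "es \<le> (1 + a) * eK" using st0 by (simp add: algebra_simps)
  have claim2: "(1 - a) * eK \<le> es" using st0 by (simp add: algebra_simps)
  have claim3: "theta * eK\<^sup>2 \<le> (eta_set eta (Tm L) Rs (w K))\<^sup>2"
    if a1: "a < 1" and Rs: "Rs \<subseteq> elems (Tm L)"
      and dm: "theta_mark * es\<^sup>2 \<le> (eta_set eta (Tm L) Rs us)\<^sup>2" for Rs
  proof -
    define eRs where "eRs = eta_set eta (Tm L) Rs us"
    define eRK where "eRK = eta_set eta (Tm L) Rs (w K)"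
    have eRs0: "0 \<le> eRs" unfolding eRs_def eta_set_def by (simp add: sum_nonneg)
    have eRK0: "0 \<le> eRK" unfolding eRK_def eta_set_def by (simp add: sum_nonneg)
    have es0: "0 \<le> es" unfolding es_def eta_set_def by (simp add: sum_nonneg)
    have stR: "eRs \<le> eRK + a * eK" using stab[OF Rs] unfolding eRs_def eRK_def by simp
    define st where "st = sqrt theta"
    have st0': "0 \<le> st" unfolding st_def using theta by simp
    have oma: "0 < 1 - a" using a1 by simp
    have tm: "theta_mark = ((st + a) / (1 - a))\<^sup>2"
      unfolding theta_mark_def st_def a_def by (simp add: power_divide)
    have "((st + a) / (1 - a) * es)\<^sup>2 \<le> eRs\<^sup>2"
      unfolding power_mult_distrib using dm unfolding tm eRs_def .
    then have "(st + a) / (1 - a) * es \<le> eRs" using eRs0 by (rule power2_le_imp_le)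
    then have h1: "(st + a) * es \<le> (1 - a) * eRs" using oma by (simp add: field_simps)
    have "(1 - a) * ((st + a) * eK) = (st + a) * ((1 - a) * eK)" by (simp add: algebra_simps)
    also have "\<dots> \<le> (st + a) * es" using claim2 st0' a0 by (intro mult_left_mono) auto
    also have "\<dots> \<le> (1 - a) * eRs" by (rule h1)
    also have "\<dots> \<le> (1 - a) * (eRK + a * eK)" using stR oma by (intro mult_left_mono) auto
    finally have "(st + a) * eK \<le> eRK + a * eK" using oma by (simp add: mult_le_cancel_left_pos)
    then have "st * eK \<le> eRK" by (simp add: algebra_simps)
    then have "(st * eK)\<^sup>2 \<le> eRK\<^sup>2" using st0' eK0 by (intro power_mono) auto
    then show ?thesis unfolding eRK_def st_def using theta by (simp add: power_mult_distrib)
  qed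
  have aeq: "a < 1 \<longleftrightarrow> lam_lin < lam_star" unfolding a_def using lspos by (simp add: field_simps)
  show ?thesis
    using claim1 claim2 claim3 aeq
    unfolding es_def eK_def a_def us_def Y_def w_def K_def by auto
qed

end
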